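(* Let $N=\{1,\ldots,n\}$, let $\mathscr{B}\in\mathfrak{B}^*(n)$ and let $\mathscr{F}=\{v\in\mathscr{BG}(n):\sum_{S\in\mathscr{B}}\lambda^{\mathscr{B}}_Sv(S)=v(N)\}$ be the corresponding facet of $\mathscr{BG}(n)$. Then: (1) if $|\mathscr{B}|=n$, every game in $\mathscr{F}$ has a core reduced to a single point; (2) otherwise, no game in the relative interior of $\mathscr{F}$ has a core reduced to a single point.
   Context: A game on $N$ is a map $v:2^N\to\mathbb{R}$ with $v(\varnothing)=0$, identified with a vector in $\mathbb{R}^{2^N\setminus\{\varnothing\}}$. The core is $C(v)=\{x\in\mathbb{R}^N:\sum_{i\in S}x_i\geqslant v(S)\ \forall S\subseteq N,\ \sum_{i\in N}x_i=v(N)\}$. A collection $\mathscr{B}$ of nonempty subsets of $N$ is balanced if there exist positive weights $(\lambda_S)_{S\in\mathscr{B}}$ with $\sum_{S\in\mathscr{B},S\ni i}\lambda_S=1$ for all $i\in N$; minimal balanced if no proper subcollection is balanced, with unique weights $\lambda^{\mathscr{B}}_S$. $\mathfrak{B}^*(n)$ is the set of minimal balanced collections other than $\{N\}$. $\mathscr{BG}(n)=\{v:\sum_{S\in\mathscr{B}}\lambda^{\mathscr{B}}_Sv(S)\leqslant v(N)\ \forall\mathscr{B}\in\mathfrak{B}^*(n)\}$ is the cone of balanced games (those with nonempty core). *)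

theory Defs
  imports "HOL-Analysis.Analysis"
begin

text \<open>Players: the finite type 'n (so N = UNIV, n = CARD('n)).
  A game is a vector in real ^ ('n set) with coordinate at the empty set equal to 0.
  Collections of coalitions are values of type 'n set set.\<close>

definition balancing_weights :: "'n::finite set set \<Rightarrow> ('n set \<Rightarrow> real) \<Rightarrow> bool" where
  "balancing_weights B lam \<longleftrightarrow>
     (\<forall>S\<in>B. lam S > 0) \<and> (\<forall>i. (\<Sum>S\<in>{S\<in>B. i \<in> S}. lam S) = 1)"

definition balanced :: "'n::finite set set \<Rightarrow> bool" where
  "balanced B \<longleftrightarrow> {} \<notin> B \<and> (\<exists>lam. balancing_weights B lam)"

definition minimal_balanced :: "'n::finite set set \<Rightarrow> bool" where
  "minimal_balanced B \<longleftrightarrow> balanced B \<and> (\<forall>B'. B' \<subset> B \<longrightarrow> \<not> balanced B')"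

text \<open>The (unique, for minimal balanced collections) balancing weights.\<close>
definition bal_weight :: "'n::finite set set \<Rightarrow> 'n set \<Rightarrow> real" where
  "bal_weight B = (SOME lam. balancing_weights B lam)"

definition Bstar :: "'n::finite set set set" where
  "Bstar = {B. minimal_balanced B \<and> B \<noteq> {UNIV}}"

definition core :: "real ^ ('n::finite set) \<Rightarrow> (real ^ 'n) set" where
  "core v = {x. (\<forall>S. (\<Sum>i\<in>S. x $ i) \<ge> v $ S) \<and> (\<Sum>i\<in>UNIV. x $ i) = v $ UNIV}"

definition balanced_games :: "(real ^ ('n::finite set)) set" where
  "balanced_games = {v. v $ {} = 0 \<and>
     (\<forall>B\<in>Bstar. (\<Sum>S\<in>B. bal_weight B S * v $ S) \<le> v $ UNIV)}"

definition facet :: "'n::finite set set \<Rightarrow> (real ^ ('n set)) set" where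
  "facet B = {v \<in> balanced_games. (\<Sum>S\<in>B. bal_weight B S * v $ S) = v $ UNIV}"

end

theory Submission
  imports Defs
begin


definition cs :: "real ^ 'n::finite \<Rightarrow> 'n set \<Rightarrow> real" where
  "cs x S = (\<Sum>i\<in>S. x $ i)"

definition chi :: "'n::finite set \<Rightarrow> real ^ 'n" where
  "chi S = (\<chi> i. if i \<in> S then 1 else 0)"

lemma chi_nth: "chi S $ i = (if i \<in> S then 1 else 0)"
  by (simp add: chi_def)

lemma inj_chi: "inj chi"
proof
  fix S T :: "'n::finite set" assume "chi S = chi T"
  then have "\<And>i. chi S $ i = chi T $ i" by simp
  then have "\<And>i. (if i \<in> S then 1 else 0) = (if i \<in> T then (1::real) else 0)" by (simp add: chi_nth)
  then show "S = T" by (metis one_neq_zero subsetI subset_antisym)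
qed

lemma inner_chi: "inner a (chi S) = cs a S"
  by (simp add: inner_vec_def chi_nth cs_def if_distrib sum.If_cases)

lemma chi_sum: "(\<Sum>S\<in>C. f S *\<^sub>R chi S) $ i = (\<Sum>S\<in>{S\<in>C. i \<in> S}. f S)"
proof -
  have "finite C" by simp
  then show ?thesis by (simp add: chi_nth sum.inter_filter if_distrib cong: if_cong)
qed

lemma cs_swap:
  fixes C :: "'n::finite set set"
  shows "(\<Sum>S\<in>C. f S * cs x S) = (\<Sum>i\<in>UNIV. x $ i * (\<Sum>S\<in>{S\<in>C. i \<in> S}. f S))"
proof -
  have "(\<Sum>S\<in>C. f S * cs x S) = (\<Sum>S\<in>C. \<Sum>i\<in>UNIV. if i \<in> S then f S * x $ i else 0)"
    by (simp add: cs_def sum_distrib_left sum.If_cases)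
  also have "\<dots> = (\<Sum>i\<in>UNIV. \<Sum>S\<in>C. if i \<in> S then f S * x $ i else 0)"
    by (rule sum.swap)
  also have "\<dots> = (\<Sum>i\<in>UNIV. x $ i * (\<Sum>S\<in>{S\<in>C. i \<in> S}. f S))"
    by (simp add: sum.inter_filter sum_distrib_left mult.commute if_distrib cong: if_cong)
  finally show ?thesis .
qed

lemma bw_cs:
  fixes C :: "'n::finite set set"
  assumes "balancing_weights C lam"
  shows "(\<Sum>S\<in>C. lam S * cs x S) = cs x UNIV"
proof -
  have "(\<Sum>S\<in>C. lam S * cs x S) = (\<Sum>i\<in>UNIV. x $ i * 1)"
    unfolding cs_swap using assms by (simp add: balancing_weights_def)
  then show ?thesis by (simp add: cs_def)
qed

lemma bw_chi:
  fixes C :: "'n::finite set set"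
  assumes "balancing_weights C lam"
  shows "(\<Sum>S\<in>C. lam S *\<^sub>R chi S) = chi UNIV"
  unfolding vec_eq_iff chi_sum using assms by (simp add: balancing_weights_def chi_nth)

lemma bal_weight_ok:
  assumes "balanced B" shows "balancing_weights B (bal_weight B)"
  using assms unfolding balanced_def bal_weight_def by (metis someI_ex)



lemma shrink:
  fixes C :: "'n::finite set set" and nu c :: "'n set \<Rightarrow> real"
  assumes nn: "\<forall>S\<in>C. nu S \<ge> 0" and one: "\<forall>i. (\<Sum>S\<in>{S\<in>C. i \<in> S}. nu S) = 1"
    and c0: "\<forall>i. (\<Sum>S\<in>{S\<in>C. i \<in> S}. c S) = 0"
    and cp: "\<forall>S\<in>C. c S > 0 \<longrightarrow> nu S > 0" and ex: "\<exists>S\<in>C. c S > 0"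
  shows "\<exists>C' al. C' \<subset> C \<and> (\<forall>S\<in>C. c S < 0 \<or> (nu S > 0 \<and> c S \<le> 0) \<longrightarrow> S \<in> C')
           \<and> balancing_weights C' al"
proof -
  define P where "P = {S\<in>C. c S > 0}"
  have fP: "finite P" by simp
  have neP: "P \<noteq> {}" using ex P_def by blast
  define r where "r = Min ((\<lambda>S. nu S / c S) ` P)"
  have rle: "\<forall>S\<in>P. r \<le> nu S / c S" using fP by (simp add: r_def)
  have "r \<in> (\<lambda>S. nu S / c S) ` P" using fP neP unfolding r_def by (intro Min_in) auto
  then obtain S1 where S1: "S1 \<in> P" "r = nu S1 / c S1" by blast
  have S1C: "S1 \<in> C" "c S1 > 0" "nu S1 > 0" using S1 cp P_def by auto
  have rpos: "r > 0" using S1 S1C by simp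
  define al where "al S = nu S - r * c S" for S
  have alnn: "al S \<ge> 0" if "S \<in> C" for S
  proof (cases "c S > 0")
    case True
    then have "r \<le> nu S / c S" using rle P_def that by auto
    then have "r * c S \<le> nu S" using True by (simp add: pos_le_divide_eq)
    then show ?thesis by (simp add: al_def)
  next
    case False
    then have "r * c S \<le> 0" using rpos by (simp add: mult_nonneg_nonpos)
    moreover have "nu S \<ge> 0" using nn that by blast
    ultimately show ?thesis by (simp add: al_def)
  qed
  have al1: "al S1 = 0" using S1 S1C by (simp add: al_def)
  define C' where "C' = {S\<in>C. al S > 0}"
  have "S1 \<notin> C'" using al1 C'_def by auto
  then have "C' \<subset> C" using S1C C'_def by blast
  moreover have "\<forall>S\<in>C. c S < 0 \<or> (nu S > 0 \<and> c S \<le> 0) \<longrightarrow> S \<in> C'"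
  proof (intro ballI impI)
    fix S assume S: "S \<in> C" "c S < 0 \<or> (nu S > 0 \<and> c S \<le> 0)"
    have "r * c S \<le> 0" using S rpos by (auto simp: mult_nonneg_nonpos)
    moreover have "c S < 0 \<Longrightarrow> r * c S < 0" using rpos by (simp add: mult_pos_neg)
    ultimately have "al S > 0" using S nn by (auto simp: al_def)
    then show "S \<in> C'" using S C'_def by auto
  qed
  moreover have "balancing_weights C' al"
    unfolding balancing_weights_def
  proof (intro conjI allI ballI)
    fix S assume "S \<in> C'" then show "al S > 0" by (simp add: C'_def)
  next
    fix i
    have "(\<Sum>S\<in>{S\<in>C'. i \<in> S}. al S) = (\<Sum>S\<in>{S\<in>C. i \<in> S}. al S)"
      by (rule sum.mono_neutral_left) (use alnn in \<open>auto simp: C'_def\<close>, fastforce)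
    also have "\<dots> = (\<Sum>S\<in>{S\<in>C. i \<in> S}. nu S) - r * (\<Sum>S\<in>{S\<in>C. i \<in> S}. c S)"
      by (simp add: al_def sum_subtractf sum_distrib_left)
    also have "\<dots> = 1" using one c0 by simp
    finally show "(\<Sum>S\<in>{S\<in>C'. i \<in> S}. al S) = 1" .
  qed
  ultimately show ?thesis by blast
qed

lemma neg_pos:
  fixes C :: "'n::finite set set" and c :: "'n set \<Rightarrow> real"
  assumes c0: "\<forall>i. (\<Sum>S\<in>{S\<in>C. i \<in> S}. c S) = 0"
    and S0: "S0 \<in> C" "S0 \<noteq> {}" "c S0 < 0"
  shows "\<exists>S\<in>C. c S > 0"
proof (rule ccontr)
  assume "\<not> ?thesis"
  then have np: "\<forall>S\<in>C. c S \<le> 0" by (auto simp: not_less)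
  obtain i where i: "i \<in> S0" using S0 by auto
  have "(\<Sum>S\<in>{S\<in>C. i \<in> S}. - c S) = 0" using c0 by (simp add: sum_negf)
  then have "\<forall>S\<in>{S\<in>C. i \<in> S}. - c S = 0"
    by (subst (asm) sum_nonneg_eq_0_iff) (use np in auto)
  then show False using S0 i by auto
qed

lemma reduce:
  fixes C :: "'n::finite set set"
  assumes "balancing_weights C nu" "{} \<notin> C" "S0 \<in> C"
  shows "\<exists>B'. B' \<subseteq> C \<and> S0 \<in> B' \<and> minimal_balanced B'"
  using assms
proof (induction "card C" arbitrary: C nu rule: less_induct)
  case less
  show ?case
  proof (cases "minimal_balanced C")
    case True then show ?thesis using less.prems by blast
  next
    case False
    have "balanced C" using less.prems balanced_def by blast
    with False obtain B'' where B'': "B'' \<subset> C" "balanced B''" unfolding minimal_balanced_def by blast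
    then obtain lam where lam: "balancing_weights B'' lam" and ne: "{} \<notin> B''" by (auto simp: balanced_def)
    have cardlt: "card B'' < card C" using B'' by (simp add: psubset_card_mono)
    show ?thesis
    proof (cases "S0 \<in> B''")
      case True
      from less.hyps[OF cardlt lam ne True] B'' show ?thesis by blast
    next
      case False
      define c where "c S = (if S \<in> B'' then lam S else 0) - nu S" for S
      have c0: "\<forall>i. (\<Sum>S\<in>{S\<in>C. i \<in> S}. c S) = 0"
      proof
        fix i
        have e: "{S\<in>C. i \<in> S} \<inter> B'' = {S\<in>B''. i \<in> S}" using B'' by auto
        have "(\<Sum>S\<in>{S\<in>C. i \<in> S}. c S) = (\<Sum>S\<in>{S\<in>C. i \<in> S}. if S \<in> B'' then lam S else 0) - (\<Sum>S\<in>{S\<in>C. i \<in> S}. nu S)"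
          by (simp add: c_def sum_subtractf)
        also have "\<dots> = (\<Sum>S\<in>{S\<in>C. i \<in> S} \<inter> B''. lam S) - 1"
          using less.prems(1) by (subst sum.inter_restrict) (auto simp: balancing_weights_def)
        also have "\<dots> = (\<Sum>S\<in>{S\<in>B''. i \<in> S}. lam S) - 1" by (simp only: e)
        also have "\<dots> = 0" using lam by (simp add: balancing_weights_def)
        finally show "(\<Sum>S\<in>{S\<in>C. i \<in> S}. c S) = 0" .
      qed
      have nupos: "\<forall>S\<in>C. nu S > 0" using less.prems(1) by (simp add: balancing_weights_def)
      have cS0: "c S0 < 0" using False nupos less.prems(3) by (simp add: c_def)
      have "S0 \<noteq> {}" using less.prems by auto
      from neg_pos[OF c0 less.prems(3) this cS0] have ex: "\<exists>S\<in>C. c S > 0" .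
      from shrink[OF _ _ c0 _ ex, of nu] nupos less.prems(1)
      obtain C' al where C': "C' \<subset> C" "\<forall>S\<in>C. c S < 0 \<or> (nu S > 0 \<and> c S \<le> 0) \<longrightarrow> S \<in> C'"
        "balancing_weights C' al"
        by (auto simp: balancing_weights_def less_imp_le)
      have "S0 \<in> C'" using C'(2) cS0 less.prems(3) by blast
      moreover have "card C' < card C" using C' by (simp add: psubset_card_mono)
      moreover have "{} \<notin> C'" using C' less.prems by auto
      ultimately show ?thesis using less.hyps C' by (meson dual_order.trans psubset_imp_subset)
    qed
  qed
qed

lemma minbal_indep:
  fixes B :: "'n::finite set set" and c :: "'n set \<Rightarrow> real"
  assumes mb: "minimal_balanced B" and c0: "\<forall>i. (\<Sum>S\<in>{S\<in>B. i \<in> S}. c S) = 0" and S1: "S1 \<in> B"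
  shows "c S1 = 0"
proof (rule ccontr)
  assume nz: "c S1 \<noteq> 0"
  obtain lam where lam: "balancing_weights B lam" and ne: "{} \<notin> B"
    using mb by (auto simp: minimal_balanced_def balanced_def)
  have ex: "\<exists>S\<in>B. c S > 0"
  proof (cases "c S1 > 0")
    case True then show ?thesis using S1 by blast
  next
    case False
    then have "c S1 < 0" using nz by simp
    moreover have "S1 \<noteq> {}" using S1 ne by auto
    ultimately show ?thesis using neg_pos[OF c0 S1] by blast
  qed
  from shrink[OF _ _ c0 _ ex, of lam] lam
  obtain C' al where C': "C' \<subset> B" "balancing_weights C' al"
    by (auto simp: balancing_weights_def less_imp_le)
  have "balanced C'" using C' ne by (auto simp: balanced_def)
  then show False using mb C' by (auto simp: minimal_balanced_def)
qed



lemma inj_on_chi: "inj_on chi X" using inj_chi by (meson inj_on_subset subset_UNIV)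

lemma indep_chi:
  fixes B :: "'n::finite set set"
  assumes mb: "minimal_balanced B"
  shows "independent (chi ` B)"
proof (rule ccontr)
  assume "\<not> independent (chi ` B)"
  then obtain u where u: "\<exists>w\<in>chi ` B. u w \<noteq> 0" "(\<Sum>w\<in>chi ` B. u w *\<^sub>R w) = 0"
    using dependent_finite[of "chi ` B"] by auto
  have "(\<Sum>S\<in>B. u (chi S) *\<^sub>R chi S) = 0"
    using u(2) by (simp add: sum.reindex[OF inj_on_chi])
  then have "\<forall>i. (\<Sum>S\<in>B. u (chi S) *\<^sub>R chi S) $ i = 0" by simp
  then have "\<forall>i. (\<Sum>S\<in>{S\<in>B. i \<in> S}. u (chi S)) = 0" by (metis chi_sum)
  then have "\<forall>S\<in>B. u (chi S) = 0" using minbal_indep[OF mb, of "\<lambda>S. u (chi S)"] by blast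
  then show False using u(1) by auto
qed

lemma card_le_n:
  fixes B :: "'n::finite set set"
  assumes mb: "minimal_balanced B"
  shows "card B \<le> CARD('n)"
proof -
  have "card (chi ` B) \<le> DIM(real ^ 'n)" using independent_bound[OF indep_chi[OF mb]] by blast
  then show ?thesis by (simp add: card_image[OF inj_on_chi])
qed

lemma core_tight:
  fixes B :: "'n::finite set set"
  assumes lam: "balancing_weights B lam" and eq: "(\<Sum>S\<in>B. lam S * v $ S) = v $ UNIV"
    and y: "y \<in> core v" and S: "S \<in> B"
  shows "cs y S = v $ S"
proof -
  have ge: "\<forall>S. cs y S \<ge> v $ S" and tot: "cs y UNIV = v $ UNIV" using y by (auto simp: core_def cs_def)
  have "(\<Sum>S\<in>B. lam S * (cs y S - v $ S)) = cs y UNIV - v $ UNIV"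
    using bw_cs[OF lam, of y] eq by (simp add: right_diff_distrib sum_subtractf)
  then have "(\<Sum>S\<in>B. lam S * (cs y S - v $ S)) = 0" using tot by simp
  moreover have "\<forall>S\<in>B. lam S * (cs y S - v $ S) \<ge> 0"
    using lam ge by (simp add: balancing_weights_def less_imp_le)
  ultimately have "\<forall>S\<in>B. lam S * (cs y S - v $ S) = 0" by (simp add: sum_nonneg_eq_0_iff)
  then show ?thesis using S lam unfolding balancing_weights_def by (metis less_irrefl mult_eq_0_iff right_minus_eq)
qed

lemma Bstar_props:
  fixes B :: "'n::finite set set"
  assumes "B \<in> Bstar"
  shows "minimal_balanced B" "balancing_weights B (bal_weight B)" "{} \<notin> B" "UNIV \<notin> B"
proof -
  show mb: "minimal_balanced B" using assms by (simp add: Bstar_def)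
  then have bB: "balanced B" by (simp add: minimal_balanced_def)
  then show "balancing_weights B (bal_weight B)" by (rule bal_weight_ok)
  show "{} \<notin> B" using bB by (simp add: balanced_def)
  show "UNIV \<notin> B"
  proof
    assume U: "UNIV \<in> B"
    have e: "\<And>i. {S\<in>{UNIV::'n set}. i \<in> S} = {UNIV}" by auto
    have "balancing_weights {UNIV::'n set} (\<lambda>_. 1)"
      unfolding balancing_weights_def e by simp
    then have bU: "balanced {UNIV::'n set}" unfolding balanced_def by blast
    have "B \<noteq> {UNIV}" using assms by (simp add: Bstar_def)
    then have "{UNIV} \<subset> B" using U by blast
    then show False using mb bU unfolding minimal_balanced_def by blast
  qed
qed



lemma chi_in_span:
  fixes B :: "'n::finite set set"
  assumes "y \<in> span (chi ` B)"
  obtains a where "y = (\<Sum>S\<in>B. a S *\<^sub>R chi S)"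
proof -
  have "finite (chi ` B)" by simp
  from assms span_finite[OF this] obtain u where "y = (\<Sum>w\<in>chi ` B. u w *\<^sub>R w)" by auto
  then have "y = (\<Sum>S\<in>B. u (chi S) *\<^sub>R chi S)" by (simp add: sum.reindex[OF inj_on_chi])
  then show ?thesis by (rule that)
qed

lemma violated:
  fixes B :: "'n::finite set set"
  assumes Bs: "B \<in> Bstar" and vb: "v \<in> balanced_games"
    and xB: "\<forall>S\<in>B. cs x S = v $ S" and tot: "cs x UNIV = v $ UNIV"
    and span: "chi T \<in> span (chi ` B)" and lt: "cs x T < v $ T"
  shows False
proof -
  note props = Bstar_props[OF Bs]
  define lam where "lam = bal_weight B"
  have lam: "balancing_weights B lam" using props lam_def by simp
  have TB: "T \<notin> B" using xB lt by auto
  have v0: "v $ {} = 0" using vb by (simp add: balanced_games_def)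
  have Tne: "T \<noteq> {}" using lt v0 by (auto simp: cs_def)
  obtain a where a: "chi T = (\<Sum>S\<in>B. a S *\<^sub>R chi S)" using chi_in_span[OF span] by blast
  define C where "C = insert T B"
  define nu where "nu S = (if S = T then 0 else lam S)" for S
  define c where "c S = (if S = T then -1 else a S)" for S
  have "(\<Sum>S\<in>C. c S *\<^sub>R chi S) = c T *\<^sub>R chi T + (\<Sum>S\<in>B. c S *\<^sub>R chi S)"
    using TB by (simp add: C_def)
  also have "(\<Sum>S\<in>B. c S *\<^sub>R chi S) = (\<Sum>S\<in>B. a S *\<^sub>R chi S)"
    by (rule sum.cong) (use TB in \<open>auto simp: c_def\<close>)
  finally have "(\<Sum>S\<in>C. c S *\<^sub>R chi S) = 0" using a by (simp add: c_def)
  then have "\<forall>i. (\<Sum>S\<in>C. c S *\<^sub>R chi S) $ i = 0" by simp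
  then have c0: "\<forall>i. (\<Sum>S\<in>{S\<in>C. i \<in> S}. c S) = 0" by (metis chi_sum)
  have "(\<Sum>S\<in>C. nu S *\<^sub>R chi S) = nu T *\<^sub>R chi T + (\<Sum>S\<in>B. nu S *\<^sub>R chi S)"
    using TB by (simp add: C_def)
  also have "(\<Sum>S\<in>B. nu S *\<^sub>R chi S) = (\<Sum>S\<in>B. lam S *\<^sub>R chi S)"
    by (rule sum.cong) (use TB in \<open>auto simp: nu_def\<close>)
  finally have "(\<Sum>S\<in>C. nu S *\<^sub>R chi S) = chi UNIV" using bw_chi[OF lam] by (simp add: nu_def)
  then have "\<forall>i. (\<Sum>S\<in>C. nu S *\<^sub>R chi S) $ i = 1" by (simp add: chi_nth)
  then have one: "\<forall>i. (\<Sum>S\<in>{S\<in>C. i \<in> S}. nu S) = 1" by (metis chi_sum)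
  have nn: "\<forall>S\<in>C. nu S \<ge> 0" using lam by (auto simp: nu_def C_def balancing_weights_def less_imp_le)
  have cp: "\<forall>S\<in>C. c S > 0 \<longrightarrow> nu S > 0" using lam by (auto simp: nu_def c_def C_def balancing_weights_def)
  have TC: "T \<in> C" by (simp add: C_def)
  have cT: "c T < 0" by (simp add: c_def)
  from neg_pos[OF c0 TC Tne cT] have ex: "\<exists>S\<in>C. c S > 0" .
  from shrink[OF nn one c0 cp ex] obtain C' al where C': "C' \<subset> C"
    "\<forall>S\<in>C. c S < 0 \<or> (nu S > 0 \<and> c S \<le> 0) \<longrightarrow> S \<in> C'" "balancing_weights C' al" by blast
  have TC': "T \<in> C'" using C'(2) TC cT by blast
  have ne': "{} \<notin> C'" using C'(1) props(3) Tne by (auto simp: C_def)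
  from reduce[OF C'(3) ne' TC'] obtain B' where B': "B' \<subseteq> C'" "T \<in> B'" "minimal_balanced B'" by blast
  have "B' \<noteq> {UNIV}"
  proof
    assume "B' = {UNIV}"
    then have "T = UNIV" using B' by auto
    then show False using tot lt by simp
  qed
  then have B'star: "B' \<in> Bstar" using B' by (simp add: Bstar_def)
  define mu where "mu = bal_weight B'"
  have mu: "balancing_weights B' mu" using Bstar_props(2)[OF B'star] mu_def by simp
  have le: "(\<Sum>S\<in>B'. mu S * v $ S) \<le> v $ UNIV" using vb B'star by (simp add: balanced_games_def mu_def)
  have "(\<Sum>S\<in>B'. mu S * cs x S) < (\<Sum>S\<in>B'. mu S * v $ S)"
  proof (rule sum_strict_mono_ex1)
    show "finite B'" by simp
    show "\<forall>S\<in>B'. mu S * cs x S \<le> mu S * v $ S"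
    proof
      fix S assume S: "S \<in> B'"
      show "mu S * cs x S \<le> mu S * v $ S"
      proof (cases "S = T")
        case True then show ?thesis using lt mu S by (simp add: balancing_weights_def)
      next
        case False
        then have "S \<in> B" using S B' C' by (auto simp: C_def)
        then show ?thesis using xB by simp
      qed
    qed
    show "\<exists>S\<in>B'. mu S * cs x S < mu S * v $ S" using B'(2) lt mu by (auto simp: balancing_weights_def)
  qed
  then show False using bw_cs[OF mu, of x] tot le by simp
qed

lemma part1:
  fixes B :: "'n::finite set set"
  assumes Bs: "B \<in> Bstar" and card: "card B = CARD('n)" and v: "v \<in> facet B"
  shows "\<exists>x. core v = {x}"
proof -
  note props = Bstar_props[OF Bs]
  define lam where "lam = bal_weight B"
  have lam: "balancing_weights B lam" using props lam_def by simp
  have eq: "(\<Sum>S\<in>B. lam S * v $ S) = v $ UNIV" and vb: "v \<in> balanced_games"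
    using v by (auto simp: facet_def lam_def)
  have ind: "independent (chi ` B)" using indep_chi props(1) .
  have "card (chi ` B) = card B" by (rule card_image[OF inj_on_chi])
  then have cardc: "card (chi ` B) = CARD('n)" using card by simp
  have "UNIV \<subseteq> span (chi ` B)"
    by (rule card_ge_dim_independent) (use ind cardc in auto)
  then have span: "span (chi ` B) = UNIV" by auto
  have dual: "\<exists>E. inner E (chi S0) = 1 \<and> (\<forall>S\<in>B. S \<noteq> S0 \<longrightarrow> inner E (chi S) = 0)"
    if S0: "S0 \<in> B" for S0
  proof -
    have "dim (chi ` (B - {S0})) \<le> card (chi ` (B - {S0}))"
      by (rule dim_le_card) (auto simp: span_superset)
    also have "\<dots> = card B - 1" using S0 by (simp add: card_image[OF inj_on_chi])
    also have "\<dots> < DIM(real ^ 'n)" using card by simp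
    finally obtain e where e: "e \<noteq> 0" "\<And>y. y \<in> span (chi ` (B - {S0})) \<Longrightarrow> orthogonal e y"
      using orthogonal_to_subspace_exists by blast
    have oth: "inner e (chi S) = 0" if "S \<in> B" "S \<noteq> S0" for S
      using e(2)[of "chi S"] that by (simp add: span_base orthogonal_def)
    have nz: "inner e (chi S0) \<noteq> 0"
    proof
      assume z: "inner e (chi S0) = 0"
      have "orthogonal e y" if "y \<in> chi ` B" for y
        using that z oth by (auto simp: orthogonal_def)
      then have "orthogonal e e" using orthogonal_to_span[of e "chi ` B" e] span by auto
      then show False using e(1) by (simp add: orthogonal_def)
    qed
    show ?thesis
      by (rule exI[of _ "(1 / inner e (chi S0)) *\<^sub>R e"]) (use nz oth in auto)
  qed
  then obtain E where E: "\<forall>S0\<in>B. inner (E S0) (chi S0) = 1 \<and> (\<forall>S\<in>B. S \<noteq> S0 \<longrightarrow> inner (E S0) (chi S) = 0)"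
    by metis
  define x where "x = (\<Sum>S0\<in>B. v $ S0 *\<^sub>R E S0)"
  have xB: "\<forall>S\<in>B. cs x S = v $ S"
  proof
    fix S assume S: "S \<in> B"
    have "cs x S = (\<Sum>S0\<in>B. v $ S0 * inner (E S0) (chi S))"
      by (simp add: inner_chi[symmetric] x_def inner_sum_left)
    also have "\<dots> = (\<Sum>S0\<in>B. if S0 = S then v $ S else 0)"
      by (rule sum.cong) (use E S in auto)
    also have "\<dots> = v $ S" using S by simp
    finally show "cs x S = v $ S" .
  qed
  have tot: "cs x UNIV = v $ UNIV" using bw_cs[OF lam, of x] eq xB by simp
  have xcore: "x \<in> core v"
  proof -
    have "cs x T \<ge> v $ T" for T
    proof (rule ccontr)
      assume "\<not> cs x T \<ge> v $ T"
      then have lt: "cs x T < v $ T" by simp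
      show False using violated[OF Bs vb xB tot _ lt] span by simp
    qed
    then show ?thesis using tot by (simp add: core_def cs_def)
  qed
  have uniq: "y = x" if y: "y \<in> core v" for y
  proof -
    have "orthogonal (y - x) w" if "w \<in> chi ` B" for w
      using that core_tight[OF lam eq y] xB by (auto simp: orthogonal_def inner_diff_left inner_chi)
    then have "orthogonal (y - x) (y - x)" using orthogonal_to_span[of "y - x" "chi ` B" "y - x"] span by auto
    then show ?thesis by (simp add: orthogonal_def)
  qed
  show ?thesis using xcore uniq by blast
qed



lemma cs_add_scale: "cs (x + t *\<^sub>R a) S = cs x S + t * cs a S"
  by (simp add: cs_def sum.distrib sum_distrib_left)

lemma perturb_core:
  assumes x: "x \<in> core v" and a: "\<forall>S. cs x S = v $ S \<longrightarrow> cs a S \<ge> 0" and aN: "cs a UNIV = 0"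
  shows "\<exists>t>0. x + t *\<^sub>R a \<in> core v"
proof -
  have ge: "\<forall>S. cs x S \<ge> v $ S" and tot: "cs x UNIV = v $ UNIV" using x by (auto simp: core_def cs_def)
  define G where "G = {S. cs x S \<noteq> v $ S}"
  define t where "t = Min (insert 1 ((\<lambda>S. (cs x S - v $ S) / (\<bar>cs a S\<bar> + 1)) ` G))"
  have fin: "finite (insert 1 ((\<lambda>S. (cs x S - v $ S) / (\<bar>cs a S\<bar> + 1)) ` G))" by simp
  have "\<forall>y\<in>insert 1 ((\<lambda>S. (cs x S - v $ S) / (\<bar>cs a S\<bar> + 1)) ` G). y > 0"
  proof
    fix y assume "y \<in> insert 1 ((\<lambda>S. (cs x S - v $ S) / (\<bar>cs a S\<bar> + 1)) ` G)"
    then consider "y = 1" | S where "S \<in> G" "y = (cs x S - v $ S) / (\<bar>cs a S\<bar> + 1)" by blast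
    then show "y > 0"
    proof cases
      case 1 then show ?thesis by simp
    next
      case 2
      then have "cs x S - v $ S > 0" using ge[rule_format, of S] by (simp add: G_def)
      moreover have "\<bar>cs a S\<bar> + 1 > 0" by (simp add: add_nonneg_pos)
      ultimately show ?thesis using 2 by simp
    qed
  qed
  then have tpos: "t > 0" unfolding t_def using fin by (subst Min_gr_iff) auto
  have "cs (x + t *\<^sub>R a) S \<ge> v $ S" for S
  proof (cases "S \<in> G")
    case True
    have "t \<le> (cs x S - v $ S) / (\<bar>cs a S\<bar> + 1)" unfolding t_def using fin True by (intro Min_le) auto
    then have "t * (\<bar>cs a S\<bar> + 1) \<le> cs x S - v $ S" by (simp add: pos_le_divide_eq add_pos_nonneg)
    moreover have "- (t * cs a S) \<le> t * (\<bar>cs a S\<bar> + 1)" using tpos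
      by (metis abs_ge_minus_self abs_ge_self add.commute le_add_same_cancel2 less_eq_real_def minus_mult_right mult_left_mono zero_le_one order_trans le_add_same_cancel1)
    ultimately show ?thesis by (simp add: cs_add_scale)
  next
    case False
    then have "cs a S \<ge> 0" using a by (simp add: G_def)
    then show ?thesis using False tpos by (simp add: G_def cs_add_scale)
  qed
  moreover have "cs (x + t *\<^sub>R a) UNIV = v $ UNIV" using tot aN by (simp add: cs_add_scale)
  ultimately show ?thesis using tpos by (intro exI[of _ t]) (simp add: core_def cs_def)
qed

lemma K_repr:
  fixes T :: "'n::finite set set"
  assumes y: "y \<in> conic hull (convex hull (insert (- chi UNIV) (chi ` T)))"
  shows "\<exists>mu m. (\<forall>S\<in>T. mu S \<ge> 0) \<and> m \<ge> 0 \<and> y = (\<Sum>S\<in>T. mu S *\<^sub>R chi S) - m *\<^sub>R chi UNIV"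
proof -
  define G where "G = insert (- chi UNIV) (chi ` T)"
  have "y \<in> conic hull (convex hull G)" using y by (simp only: G_def)
  then obtain c z where cz: "y = c *\<^sub>R z" "c \<ge> 0" "z \<in> convex hull G" unfolding conic_hull_explicit by blast
  have fG: "finite G" by (simp add: G_def)
  obtain u where u: "\<forall>g\<in>G. u g \<ge> 0" "z = (\<Sum>g\<in>G. u g *\<^sub>R g)"
    using cz(3) unfolding convex_hull_finite[OF fG] by blast
  have notin: "- chi UNIV \<notin> chi ` T"
  proof
    assume "- chi UNIV \<in> chi ` T"
    then obtain S :: "'n set" where "- chi UNIV = chi S" by blast
    then have "(- chi (UNIV::'n set)) $ (undefined::'n) = chi S $ undefined" by (rule arg_cong[where f="\<lambda>w. w $ undefined"])
    then show False by (simp add: chi_nth split: if_splits)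
  qed
  have "z = u (- chi UNIV) *\<^sub>R (- chi UNIV) + (\<Sum>S\<in>T. u (chi S) *\<^sub>R chi S)"
    using u(2) notin by (simp add: G_def sum.reindex[OF inj_on_chi])
  then have "y = c *\<^sub>R (u (- chi UNIV) *\<^sub>R (- chi UNIV)) + c *\<^sub>R (\<Sum>S\<in>T. u (chi S) *\<^sub>R chi S)"
    using cz(1) by (simp only: scaleR_right_distrib)
  also have "c *\<^sub>R (\<Sum>S\<in>T. u (chi S) *\<^sub>R chi S) = (\<Sum>S\<in>T. (c * u (chi S)) *\<^sub>R chi S)"
    by (simp only: scaleR_sum_right scaleR_scaleR)
  also have "c *\<^sub>R (u (- chi UNIV) *\<^sub>R (- chi UNIV)) = - ((c * u (- chi UNIV)) *\<^sub>R chi UNIV)"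
    by (simp only: scaleR_scaleR scaleR_minus_right)
  finally have "y = (\<Sum>S\<in>T. (c * u (chi S)) *\<^sub>R chi S) - (c * u (- chi UNIV)) *\<^sub>R chi UNIV"
    by (simp only: add.commute diff_conv_add_uminus)
  moreover have "\<forall>S\<in>T. c * u (chi S) \<ge> 0" using u(1) cz(2) by (simp add: G_def)
  moreover have "c * u (- chi UNIV) \<ge> 0" using u(1) cz(2) by (simp add: G_def)
  ultimately show ?thesis
    by (intro exI[of _ "\<lambda>S. c * u (chi S)"] exI[of _ "c * u (- chi UNIV)"]) blast
qed

lemma farkas_core:
  fixes v :: "real ^ ('n::finite set)"
  assumes core: "core v = {x}"
  shows "\<exists>mu m. (\<forall>S\<in>{S. cs x S = v $ S}. mu S \<ge> 0) \<and> m \<ge> 0 \<and>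
           e = (\<Sum>S\<in>{S. cs x S = v $ S}. mu S *\<^sub>R chi S) - m *\<^sub>R chi UNIV"
proof -
  define T where "T = {S. cs x S = v $ S}"
  define K where "K = conic hull (convex hull (insert (- chi UNIV) (chi ` T)))"
  have x: "x \<in> core v" using core by simp
  have UT: "UNIV \<in> T" using x by (simp add: core_def cs_def T_def)
  have "e \<in> K"
  proof (rule ccontr)
    assume eK: "e \<notin> K"
    have "convex K" unfolding K_def by (intro convex_conic_hull convex_convex_hull)
    moreover have "polytope (convex hull (insert (- chi UNIV) (chi ` T)))"
      unfolding polytope_def by (intro exI[of _ "insert (- chi UNIV) (chi ` T)"]) simp
    then have "closed K" unfolding K_def
      by (intro closed_conic_hull_strong) simp
    ultimately obtain a b where ab: "inner a e < b" "\<forall>y\<in>K. b < inner a y"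
      using separating_hyperplane_closed_point eK by blast
    have GK: "insert (- chi UNIV) (chi ` T) \<subseteq> K" unfolding K_def
      by (meson hull_subset order_trans)
    have "conic K" unfolding K_def by (rule conic_conic_hull)
    moreover have "K \<noteq> {}" using GK by auto
    ultimately have "0 \<in> K" by (simp add: conic_contains_0)
    then have bneg: "b < 0" using ab by auto
    have nonneg: "inner a y \<ge> 0" if "y \<in> K" for y
    proof (rule ccontr)
      assume "\<not> inner a y \<ge> 0"
      then have neg: "inner a y < 0" by simp
      define t where "t = b / inner a y"
      have "t \<ge> 0" using neg bneg by (simp add: t_def divide_nonpos_neg less_imp_le)
      then have "t *\<^sub>R y \<in> K" using \<open>conic K\<close> that by (simp add: conicD)
      moreover have "inner a (t *\<^sub>R y) = b" using neg by (simp add: t_def)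
      ultimately show False using ab by fastforce
    qed
    have aT: "\<forall>S. cs x S = v $ S \<longrightarrow> cs a S \<ge> 0"
      using nonneg GK by (auto simp: T_def inner_chi[symmetric])
    have "- chi UNIV \<in> K" using GK by auto
    from nonneg[OF this] have "inner a (chi UNIV) \<le> 0" by simp
    moreover have "inner a (chi UNIV) \<ge> 0" using nonneg GK UT by auto
    ultimately have aN: "cs a UNIV = 0" by (simp add: inner_chi)
    obtain t where t: "t > 0" "x + t *\<^sub>R a \<in> core v" using perturb_core[OF x aT aN] by blast
    then have "t *\<^sub>R a = 0" using core by simp
    then have "a = 0" using t by simp
    then show False using ab bneg by simp
  qed
  then show ?thesis using K_repr unfolding K_def T_def by blast
qed



lemma part2:
  fixes B :: "'n::finite set set"
  assumes Bs: "B \<in> Bstar" and card: "card B \<noteq> CARD('n)" and vr: "v \<in> rel_interior (facet B)"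
    and core: "core v = {x}"
  shows False
proof -
  note props = Bstar_props[OF Bs]
  define lam where "lam = bal_weight B"
  have lam: "balancing_weights B lam" using props lam_def by simp
  have vF: "v \<in> facet B" using vr rel_interior_subset by blast
  have eq: "(\<Sum>S\<in>B. lam S * v $ S) = v $ UNIV" and vb: "v \<in> balanced_games"
    using vF by (auto simp: facet_def lam_def)
  have xc: "x \<in> core v" using core by simp
  have xB: "\<forall>S\<in>B. cs x S = v $ S" using core_tight[OF lam eq xc] by blast
  have tot: "cs x UNIV = v $ UNIV" using xc by (simp add: core_def cs_def)
  have ge: "\<forall>S. cs x S \<ge> v $ S" using xc by (simp add: core_def cs_def)
  have v0: "v $ {} = 0" using vb by (simp add: balanced_games_def)
  have "card B < CARD('n)" using card card_le_n[OF props(1)] by simp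
  have "dim (chi ` B) \<le> card (chi ` B)" by (rule dim_le_card) (auto simp: span_superset)
  also have "\<dots> = card B" by (rule card_image[OF inj_on_chi])
  also have "\<dots> < DIM(real ^ 'n)" using \<open>card B < CARD('n)\<close> by simp
  finally obtain d where d: "d \<noteq> 0" "\<And>y. y \<in> span (chi ` B) \<Longrightarrow> orthogonal d y"
    using orthogonal_to_subspace_exists by blast
  have dB: "cs d S = 0" if "S \<in> B" for S
    using d(2)[of "chi S"] that by (simp add: span_base orthogonal_def inner_chi)
  have dN: "cs d UNIV = 0"
  proof -
    have "cs d UNIV = inner d (\<Sum>S\<in>B. lam S *\<^sub>R chi S)" by (simp add: bw_chi[OF lam] inner_chi)
    also have "\<dots> = (\<Sum>S\<in>B. lam S * cs d S)" by (simp add: inner_sum_right inner_chi)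
    also have "\<dots> = 0" using dB by simp
    finally show ?thesis .
  qed
  define T where "T = {S. cs x S = v $ S}"
  obtain mu m where mu: "\<forall>S\<in>T. mu S \<ge> 0" "m \<ge> 0" "d = (\<Sum>S\<in>T. mu S *\<^sub>R chi S) - m *\<^sub>R chi UNIV"
    using farkas_core[OF core, of d] unfolding T_def by blast
  obtain mu' m' where mu': "\<forall>S\<in>T. mu' S \<ge> 0" "m' \<ge> 0" "- d = (\<Sum>S\<in>T. mu' S *\<^sub>R chi S) - m' *\<^sub>R chi UNIV"
    using farkas_core[OF core, of "- d"] unfolding T_def by blast
  have "inner d d = (\<Sum>S\<in>T. mu S * cs d S) - m * cs d UNIV"
    by (subst (2) mu(3)) (simp add: inner_diff_right inner_sum_right inner_chi)
  then have "inner d d = (\<Sum>S\<in>T. mu S * cs d S)" using dN by simp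
  moreover have "inner d d \<noteq> 0" using d(1) by simp
  ultimately have "(\<Sum>S\<in>T. mu S * cs d S) \<noteq> 0" by simp
  then obtain S0 where S0: "S0 \<in> T" "mu S0 * cs d S0 \<noteq> 0"
    by (rule sum.not_neutral_contains_not_neutral)
  have "mu S0 \<noteq> 0" using S0(2) by auto
  moreover have "mu S0 \<ge> 0" using S0(1) mu(1) by blast
  ultimately have muS0: "mu S0 > 0" by linarith
  have dS0: "cs d S0 \<noteq> 0" using S0 by simp
  have S0ne: "S0 \<noteq> {}" using dS0 by (auto simp: cs_def)
  have S0B: "S0 \<notin> B" using dS0 dB by blast
  have S0U: "S0 \<noteq> UNIV" using dS0 dN by blast
  define nu where "nu S = mu S + mu' S" for S
  define k where "k = m + m'"
  have nunn: "\<forall>S\<in>T. nu S \<ge> 0" using mu(1) mu'(1) by (simp add: nu_def)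
  have e1: "(\<Sum>S\<in>T. nu S *\<^sub>R chi S) = (\<Sum>S\<in>T. mu S *\<^sub>R chi S) + (\<Sum>S\<in>T. mu' S *\<^sub>R chi S)"
    by (simp add: nu_def scaleR_add_left sum.distrib)
  have e2: "k *\<^sub>R chi UNIV = m *\<^sub>R chi UNIV + m' *\<^sub>R chi UNIV" by (simp add: k_def scaleR_add_left)
  have e3: "\<And>a b c e :: real ^ 'n. (a + b) - (c + e) = (a - c) + (b - e)" by (simp add: algebra_simps)
  have "(\<Sum>S\<in>T. nu S *\<^sub>R chi S) - k *\<^sub>R chi UNIV = d + - d"
    unfolding e1 e2 e3 mu(3)[symmetric] mu'(3)[symmetric] ..
  then have "(\<Sum>S\<in>T. nu S *\<^sub>R chi S) = k *\<^sub>R chi UNIV" by simp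
  then have "\<forall>i. (\<Sum>S\<in>T. nu S *\<^sub>R chi S) $ i = k" by (simp add: chi_nth)
  then have sumk: "\<forall>i. (\<Sum>S\<in>{S\<in>T. i \<in> S}. nu S) = k" by (metis chi_sum)
  obtain i0 where i0: "i0 \<in> S0" using S0ne by auto
  have "nu S0 \<le> (\<Sum>S\<in>{S\<in>T. i0 \<in> S}. nu S)"
    by (rule member_le_sum) (use S0 i0 nunn in auto)
  then have "nu S0 \<le> k" using sumk by simp
  moreover have "nu S0 \<ge> mu S0" using mu'(1) S0 by (simp add: nu_def)
  ultimately have kpos: "k > 0" using muS0 by simp
  define C where "C = {S\<in>T. S \<noteq> {} \<and> nu S > 0}"
  define w where "w S = nu S / k" for S
  have bwC: "balancing_weights C w"
    unfolding balancing_weights_def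
  proof (intro conjI allI ballI)
    fix S assume "S \<in> C" then show "w S > 0" using kpos by (simp add: C_def w_def)
  next
    fix i
    have "(\<Sum>S\<in>{S\<in>C. i \<in> S}. nu S) = (\<Sum>S\<in>{S\<in>T. i \<in> S}. nu S)"
    proof (rule sum.mono_neutral_left)
      show "finite {S\<in>T. i \<in> S}" by simp
      show "{S\<in>C. i \<in> S} \<subseteq> {S\<in>T. i \<in> S}" by (auto simp: C_def)
      show "\<forall>S\<in>{S\<in>T. i \<in> S} - {S\<in>C. i \<in> S}. nu S = 0"
        using nunn by (force simp: C_def)
    qed
    then show "(\<Sum>S\<in>{S\<in>C. i \<in> S}. w S) = 1"
      using sumk kpos by (simp add: w_def sum_divide_distrib[symmetric])
  qed
  have neC: "{} \<notin> C" by (simp add: C_def)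
  have S0C: "S0 \<in> C" using S0 S0ne muS0 mu'(1) by (simp add: C_def nu_def add_pos_nonneg)
  from reduce[OF bwC neC S0C] obtain B' where B': "B' \<subseteq> C" "S0 \<in> B'" "minimal_balanced B'" by blast
  have "B' \<noteq> {UNIV}" using B' S0U by auto
  then have B'star: "B' \<in> Bstar" using B' by (simp add: Bstar_def)
  define mw where "mw = bal_weight B'"
  have mw: "balancing_weights B' mw" using Bstar_props(2)[OF B'star] mw_def by simp
  have B'T: "\<forall>S\<in>B'. cs x S = v $ S" using B' by (auto simp: C_def T_def)
  define z :: "real ^ ('n set)" where "z = (\<chi> S. if S = S0 then 1 else 0)"
  define v' where "v' = v - z"
  have v'nth: "v' $ S = v $ S - (if S = S0 then 1 else 0)" for S by (simp add: v'_def z_def)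
  have v'F: "v' \<in> facet B"
  proof -
    have "v' $ {} = 0" using v0 S0ne by (simp add: v'nth)
    moreover have "(\<Sum>S\<in>B''. bal_weight B'' S * v' $ S) \<le> v' $ UNIV" if B'': "B'' \<in> Bstar" for B''
    proof -
      have bw'': "balancing_weights B'' (bal_weight B'')" using Bstar_props(2)[OF B''] .
      have "(\<Sum>S\<in>B''. bal_weight B'' S * v' $ S) \<le> (\<Sum>S\<in>B''. bal_weight B'' S * v $ S)"
        by (rule sum_mono) (use bw'' in \<open>auto simp: v'nth balancing_weights_def\<close>)
      also have "\<dots> \<le> v $ UNIV" using vb B'' by (simp add: balanced_games_def)
      finally show ?thesis using S0U by (simp add: v'nth)
    qed
    moreover have "(\<Sum>S\<in>B. bal_weight B S * v' $ S) = v' $ UNIV"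
    proof -
      have "(\<Sum>S\<in>B. bal_weight B S * v' $ S) = (\<Sum>S\<in>B. lam S * v $ S)"
        by (rule sum.cong) (use S0B in \<open>auto simp: v'nth lam_def\<close>)
      then show ?thesis using eq S0U by (simp add: v'nth)
    qed
    ultimately show ?thesis by (simp add: facet_def balanced_games_def)
  qed
  obtain e where e: "e > 0" "cball v e \<inter> affine hull (facet B) \<subseteq> facet B"
    using vr mem_rel_interior_cball by blast
  define s where "s = e / (norm z + 1)"
  have spos: "s > 0" using e by (simp add: s_def add_nonneg_pos)
  define w' where "w' = v + s *\<^sub>R z"
  have "dist v w' = s * norm z" using spos by (simp add: w'_def dist_norm)
  also have "\<dots> \<le> e"
  proof -
    have "s * norm z = e * (norm z / (norm z + 1))" by (simp add: s_def)
    also have "\<dots> \<le> e * 1"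
    proof (rule mult_left_mono)
      have "norm z \<le> norm z + 1" by simp
      then show "norm z / (norm z + 1) \<le> 1" by (simp add: divide_le_eq_1 add_nonneg_pos)
      show "0 \<le> e" using e by simp
    qed
    finally show ?thesis by simp
  qed
  finally have "w' \<in> cball v e" by simp
  moreover have "w' \<in> affine hull (facet B)"
  proof -
    have "(1 + s) *\<^sub>R v + (- s) *\<^sub>R v' \<in> affine hull (facet B)"
      by (rule mem_affine[OF affine_affine_hull]) (use vF v'F in \<open>auto intro: hull_inc\<close>)
    moreover have "(1 + s) *\<^sub>R v + (- s) *\<^sub>R v' = w'"
      by (simp add: w'_def v'_def algebra_simps)
    ultimately show ?thesis by simp
  qed
  ultimately have "w' \<in> facet B" using e by blast
  then have "(\<Sum>S\<in>B'. mw S * w' $ S) \<le> w' $ UNIV"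
    using B'star by (simp add: facet_def balanced_games_def mw_def)
  moreover have "w' $ UNIV = v $ UNIV" using S0U by (simp add: w'_def z_def)
  moreover have "(\<Sum>S\<in>B'. mw S * w' $ S) = (\<Sum>S\<in>B'. mw S * v $ S) + s * mw S0"
  proof -
    have "(\<Sum>S\<in>B'. mw S * w' $ S) = (\<Sum>S\<in>B'. mw S * v $ S + (if S = S0 then s * mw S else 0))"
      by (rule sum.cong) (auto simp: w'_def z_def algebra_simps)
    also have "\<dots> = (\<Sum>S\<in>B'. mw S * v $ S) + (\<Sum>S\<in>B'. if S = S0 then s * mw S else 0)"
      by (rule sum.distrib)
    also have "(\<Sum>S\<in>B'. if S = S0 then s * mw S else 0) = s * mw S0"
      using B'(2) by (simp add: sum.delta)
    finally show ?thesis .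
  qed
  moreover have "(\<Sum>S\<in>B'. mw S * v $ S) = v $ UNIV"
  proof -
    have "(\<Sum>S\<in>B'. mw S * v $ S) = (\<Sum>S\<in>B'. mw S * cs x S)" using B'T by simp
    then show ?thesis using bw_cs[OF mw, of x] tot by simp
  qed
  moreover have "mw S0 > 0" using mw B'(2) by (simp add: balancing_weights_def)
  moreover have "s * mw S0 > 0" using spos \<open>mw S0 > 0\<close> by simp
  ultimately show False by linarith
qed


theorem theorem17:
  fixes B :: "'n::finite set set"
  assumes "B \<in> Bstar"
  shows "(card B = CARD('n) \<longrightarrow> (\<forall>v\<in>facet B. \<exists>x. core v = {x}))
       \<and> (card B \<noteq> CARD('n) \<longrightarrow> (\<forall>v\<in>rel_interior (facet B). \<not> (\<exists>x. core v = {x})))"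
  using part1[OF assms] part2[OF assms] by blast

end
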